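(* Let $G$ be an abelian group, $S$ a multiset of elements of $G$, and $\Gamma=\Phi(G,S)$. For any two distinct members $s,t$ of $S$, all the connected components of the induced subgraph $\Gamma[V_s\cup V_t]$ are isomorphic to one another, and each is complete bipartite (every vertex of the component lying in $V_s$ is adjacent to every vertex of the component lying in $V_t$).
   Context: For a group $G$ and a multiset $S$ of elements of $G$, $\Phi(G,S)$ is the multigraph (parallel edges allowed) whose vertex set is the union over the members $s$ of $S$ (with multiplicity, a repeated element giving a separate copy of its cosets per occurrence) of the levels $V_s=\{\langle s\rangle x: x\in G\}$ (right cosets), with, for $\langle s\rangle x\in V_s$, $\langle t\rangle y\in V_t$, $s,t$ distinct members of $S$, one edge labeled $g$ between them for each $g\in\langle s\rangle x\cap\langle t\rangle y$, and no other edges. The induced subgraph $\Gamma[X]$ has vertex set $X$ and all edges of $\Gamma$ with both end-points in $X$. *)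

theory Defs
  imports "HOL-Algebra.Algebra"
begin

text \<open>Generic multigraphs with parallel edges: a vertex set V, an edge set E and an
endpoint map ep assigning to each edge its (two-element) set of end-points.\<close>

definition mg_adj :: "'e set \<Rightarrow> ('e \<Rightarrow> 'v set) \<Rightarrow> 'v \<Rightarrow> 'v \<Rightarrow> bool" where
  "mg_adj E ep v w \<longleftrightarrow> (\<exists>e\<in>E. ep e = {v, w})"

definition induced_edges :: "'e set \<Rightarrow> ('e \<Rightarrow> 'v set) \<Rightarrow> 'v set \<Rightarrow> 'e set" where
  "induced_edges E ep W = {ed. ed \<in> E \<and> ep ed \<subseteq> W}"

definition mg_component :: "'v set \<Rightarrow> 'e set \<Rightarrow> ('e \<Rightarrow> 'v set) \<Rightarrow> 'v \<Rightarrow> 'v set" where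
  "mg_component V E ep v =
     {w \<in> V. (v, w) \<in> {(x, y). x \<in> V \<and> y \<in> V \<and> mg_adj E ep x y}\<^sup>*}"

definition mg_components :: "'v set \<Rightarrow> 'e set \<Rightarrow> ('e \<Rightarrow> 'v set) \<Rightarrow> 'v set set" where
  "mg_components V E ep = mg_component V E ep ` V"

definition mg_iso :: "'v set \<Rightarrow> 'e set \<Rightarrow> ('e \<Rightarrow> 'v set) \<Rightarrow>
                      'w set \<Rightarrow> 'f set \<Rightarrow> ('f \<Rightarrow> 'w set) \<Rightarrow> bool" where
  "mg_iso V E ep V' E' ep' \<longleftrightarrow>
     (\<exists>f h. bij_betw f V V' \<and> bij_betw h E E' \<and> (\<forall>e\<in>E. ep' (h e) = f ` ep e))"

text \<open>The multiset S is given as a finite index set I together with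
s : I -> carrier G (member i of S is s i; repeated elements are distinct indices).
An edge is a pair (end-point set, label g).\<close>

definition Phi_level :: "('a, 'b) monoid_scheme \<Rightarrow> ('i \<Rightarrow> 'a) \<Rightarrow> 'i \<Rightarrow> ('i \<times> 'a set) set" where
  "Phi_level G s i = {(i, C) | C. C \<in> rcosets\<^bsub>G\<^esub> (generate G {s i})}"

definition Phi_V :: "('a, 'b) monoid_scheme \<Rightarrow> 'i set \<Rightarrow> ('i \<Rightarrow> 'a) \<Rightarrow> ('i \<times> 'a set) set" where
  "Phi_V G I s = (\<Union>i\<in>I. Phi_level G s i)"

definition Phi_E :: "('a, 'b) monoid_scheme \<Rightarrow> 'i set \<Rightarrow> ('i \<Rightarrow> 'a)
                      \<Rightarrow> (('i \<times> 'a set) set \<times> 'a) set" where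
  "Phi_E G I s = {({(i, C), (j, D)}, g) | i C j D g.
      (i, C) \<in> Phi_V G I s \<and> (j, D) \<in> Phi_V G I s \<and> i \<noteq> j \<and> g \<in> C \<inter> D}"

end

theory Submission
  imports Defs
begin

context comm_group begin
lemma rc_mem: "H \<subseteq> carrier G \<Longrightarrow> c \<in> H #> x \<longleftrightarrow> (\<exists>h\<in>H. c = h \<otimes> x)"
  by (auto simp: r_coset_def)
lemma rc_cases: assumes "C \<in> rcosets H" obtains x where "x \<in> carrier G" "C = H #> x"
  using assms unfolding RCOSETS_def by blast
lemma rc_diff: assumes "subgroup H G" "C \<in> rcosets H" "c \<in> C" "d \<in> C" shows "c \<otimes> inv d \<in> H"
proof -
  obtain x where x: "x \<in> carrier G" "C = H #> x" using rc_cases assms(2) by blast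
  have Hc: "H \<subseteq> carrier G" using assms(1) subgroup.subset by blast
  obtain h h' where h: "h \<in> H" "h' \<in> H" "c = h \<otimes> x" "d = h' \<otimes> x" using assms(3,4) x rc_mem[OF Hc] by blast
  have hc: "h \<in> carrier G" "h' \<in> carrier G" using h Hc by auto
  have "c \<otimes> inv d = h \<otimes> inv h'" using h hc x by (simp add: inv_mult_group m_ac)
  also have "\<dots> \<in> H" using h assms(1) by (simp add: subgroup.m_closed subgroup.m_inv_closed)
  finally show ?thesis .
qed
lemma rc_left: assumes "subgroup H G" "C \<in> rcosets H" "c \<in> C" "h \<in> H" shows "h \<otimes> c \<in> C"
proof -
  obtain x where x: "x \<in> carrier G" "C = H #> x" using rc_cases assms(2) by blast
  have Hc: "H \<subseteq> carrier G" using assms(1) subgroup.subset by blast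
  obtain h' where h: "h' \<in> H" "c = h' \<otimes> x" using assms(3) x rc_mem[OF Hc] by blast
  have "h \<in> carrier G" "h' \<in> carrier G" using h Hc assms(4) by auto
  then have "h \<otimes> c = (h \<otimes> h') \<otimes> x" using h x by (simp add: m_assoc)
  moreover have "h \<otimes> h' \<in> H" using h assms by (simp add: subgroup.m_closed)
  ultimately show ?thesis using x rc_mem[OF Hc] by blast
qed
lemma rc_sub: assumes "subgroup H G" "C \<in> rcosets H" shows "C \<subseteq> carrier G" "C \<noteq> {}"
proof -
  obtain x where x: "x \<in> carrier G" "C = H #> x" using rc_cases assms(2) by blast
  have Hc: "H \<subseteq> carrier G" using assms(1) subgroup.subset by blast
  show "C \<subseteq> carrier G" using x Hc by (auto simp: rc_mem[OF Hc] subsetD)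
  have "\<one> \<otimes> x \<in> C" using x rc_mem[OF Hc] assms(1) subgroup.one_closed by blast
  then show "C \<noteq> {}" by blast
qed
lemma rc_eq: assumes "subgroup H G" "C \<in> rcosets H" "D \<in> rcosets H" "c \<in> C" "c \<in> D" shows "C = D"
proof -
  have Hc: "H \<subseteq> carrier G" using assms(1) subgroup.subset by blast
  have *: "A \<subseteq> B" if "A \<in> rcosets H" "B \<in> rcosets H" "c \<in> A" "c \<in> B" for A B
  proof
    fix y assume y: "y \<in> A"
    have "y \<otimes> inv c \<in> H" using rc_diff[OF assms(1) that(1) y that(3)] .
    from rc_left[OF assms(1) that(2) that(4) this]
    have "(y \<otimes> inv c) \<otimes> c \<in> B" .
    moreover have "y \<in> carrier G" "c \<in> carrier G" using rc_sub[OF assms(1) that(1)] y that(3) by auto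
    ultimately show "y \<in> B" by (simp add: m_assoc)
  qed
  show ?thesis using *[of C D] *[of D C] assms by blast
qed
lemma rc_trans: assumes "subgroup H G" "C \<in> rcosets H" "g \<in> carrier G" shows "C #> g \<in> rcosets H"
proof -
  obtain x where x: "x \<in> carrier G" "C = H #> x" using rc_cases assms(2) by blast
  have Hc: "H \<subseteq> carrier G" using assms(1) subgroup.subset by blast
  have "C #> g = H #> (x \<otimes> g)" using x coset_mult_assoc[OF Hc] assms by simp
  then show ?thesis using x assms unfolding RCOSETS_def by auto
qed
lemma rc_back: assumes "C \<subseteq> carrier G" "g \<in> carrier G" shows "(C #> g) #> inv g = C"
  using assms by (simp add: coset_mult_assoc)
lemma rc_mult: "c \<in> C \<Longrightarrow> c \<otimes> g \<in> C #> g"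
  by (auto simp: r_coset_def)
lemma prop5_aux:
  fixes I :: "'i set" and s :: "'i \<Rightarrow> 'a"
  assumes "finite I" and "s \<in> I \<rightarrow> carrier G"
    and "i \<in> I" and "j \<in> I" and "i \<noteq> j"
  shows "let W = Phi_level G s i \<union> Phi_level G s j;
             E = induced_edges (Phi_E G I s) fst W
         in (\<forall>K\<in>mg_components W E fst. \<forall>L\<in>mg_components W E fst.
               mg_iso K (induced_edges E fst K) fst L (induced_edges E fst L) fst)
          \<and> (\<forall>K\<in>mg_components W E fst. \<forall>v\<in>K \<inter> Phi_level G s i. \<forall>w\<in>K \<inter> Phi_level G s j.
               mg_adj E fst v w)"
proof -
  define H where "H = (\<lambda>k. generate G {s k})"
  have subH: "subgroup (H k) G" if "k \<in> I" for k
    using that assms(2) unfolding H_def by (intro generate_is_subgroup) auto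
  define W where "W = Phi_level G s i \<union> Phi_level G s j"
  define E where "E = induced_edges (Phi_E G I s) fst W"
  define R where "R = {(x, y). x \<in> W \<and> y \<in> W \<and> mg_adj E fst x y}"
  define comp where "comp = mg_component W E fst"
  have compD: "comp v = {w \<in> W. (v,w) \<in> R\<^sup>*}" for v
    unfolding comp_def mg_component_def R_def by simp
  have W_iff: "v \<in> W \<longleftrightarrow> (fst v = i \<or> fst v = j) \<and> snd v \<in> rcosets (H (fst v))" for v
    unfolding W_def Phi_level_def H_def by (cases v) auto
  have WV: "W \<subseteq> Phi_V G I s" unfolding W_def Phi_V_def using assms(3,4) by auto
  have Wsub: "subgroup (H (fst v)) G" if "v \<in> W" for v using W_iff subH assms(3,4) that by auto
  have Wcos: "snd v \<in> rcosets (H (fst v))" if "v \<in> W" for v using W_iff that by auto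
  have Wcar: "snd v \<subseteq> carrier G" if "v \<in> W" for v using rc_sub[OF Wsub Wcos] that by auto
  have E_iff: "e \<in> E \<longleftrightarrow> (\<exists>x y a. e = ({x,y},a) \<and> x \<in> W \<and> y \<in> W \<and> fst x \<noteq> fst y \<and> a \<in> snd x \<and> a \<in> snd y)" for e
  proof
    assume "e \<in> E" then show "\<exists>x y a. e = ({x,y},a) \<and> x \<in> W \<and> y \<in> W \<and> fst x \<noteq> fst y \<and> a \<in> snd x \<and> a \<in> snd y"
      unfolding E_def induced_edges_def Phi_E_def by fastforce
  next
    assume "\<exists>x y a. e = ({x,y},a) \<and> x \<in> W \<and> y \<in> W \<and> fst x \<noteq> fst y \<and> a \<in> snd x \<and> a \<in> snd y"
    then obtain x y a where h: "e = ({x,y},a)" "x \<in> W" "y \<in> W" "fst x \<noteq> fst y" "a \<in> snd x" "a \<in> snd y" by blast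
    obtain i' C where x: "x = (i', C)" by (cases x)
    obtain j' D where y: "y = (j', D)" by (cases y)
    have "x \<in> Phi_V G I s" "y \<in> Phi_V G I s" using h WV by auto
    then have "({(i',C),(j',D)}, a) \<in> Phi_E G I s"
      unfolding Phi_E_def mem_Collect_eq using h x y
      by (intro exI[of _ i'] exI[of _ C] exI[of _ j'] exI[of _ D] exI[of _ a]) auto
    then show "e \<in> E" unfolding E_def induced_edges_def using h x y by auto
  qed
  have adj_D: "x \<in> W \<and> y \<in> W \<and> fst x \<noteq> fst y \<and> (\<exists>m. m \<in> snd x \<and> m \<in> snd y)" if adj: "mg_adj E fst x y" for x y
  proof -
    obtain e where e: "e \<in> E" "fst e = {x,y}" using adj unfolding mg_adj_def by blast
    then obtain x' y' a where h: "e = ({x',y'},a)" "x' \<in> W" "y' \<in> W" "fst x' \<noteq> fst y'" "a \<in> snd x'" "a \<in> snd y'"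
      using E_iff by blast
    have "{x',y'} = {x,y}" using h e by simp
    then have "(x = x' \<and> y = y') \<or> (x = y' \<and> y = x')" by (auto simp: doubleton_eq_iff)
    then show ?thesis using h by auto
  qed
  have adj_I: "mg_adj E fst x y" if "x \<in> W" "y \<in> W" "fst x \<noteq> fst y" "m \<in> snd x" "m \<in> snd y" for x y m
  proof -
    have "({x,y},m) \<in> E" using E_iff[of "({x,y},m)"] that by blast
    then show ?thesis unfolding mg_adj_def by force
  qed
  have adj_sym: "mg_adj E fst y x" if "mg_adj E fst x y" for x y
    using that unfolding mg_adj_def by (simp add: insert_commute)
  have Rconv: "R\<inverse> = R" unfolding R_def using adj_sym by auto
  have R_sym: "(y,x) \<in> R\<^sup>*" if "(x,y) \<in> R\<^sup>*" for x y
    using rtrancl_converseI[OF that] Rconv by simp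
  have comp_eq: "comp x = comp y" if "(x,y) \<in> R\<^sup>*" for x y
  proof -
    have yx: "(y,x) \<in> R\<^sup>*" using R_sym[OF that] .
    have "(x,w) \<in> R\<^sup>* \<longleftrightarrow> (y,w) \<in> R\<^sup>*" for w
      using rtrancl_trans[OF that, of w] rtrancl_trans[OF yx, of w] by blast
    then show ?thesis unfolding compD by blast
  qed
  define T where "T = (\<lambda>g (v::'i \<times> 'a set). (fst v, snd v #> g))"
  define \<tau> where "\<tau> = (\<lambda>g (e::('i \<times> 'a set) set \<times> 'a). (T g ` fst e, snd e \<otimes> g))"
  have Tfst: "fst (T g v) = fst v" for g v unfolding T_def by simp
  have TW: "T g v \<in> W" if "g \<in> carrier G" "v \<in> W" for g v
    using W_iff[of v] W_iff[of "T g v"] rc_trans[OF Wsub[OF that(2)] Wcos[OF that(2)] that(1)] that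
    unfolding T_def by auto
  have TT: "T (inv g) (T g v) = v" if "g \<in> carrier G" "v \<in> W" for g v
    using rc_back[OF Wcar[OF that(2)] that(1)] unfolding T_def by simp
  have Tmem: "c \<otimes> g \<in> snd (T g v)" if "c \<in> snd v" for c g v
    using rc_mult[OF that] unfolding T_def by simp
  have Tadj: "mg_adj E fst (T g x) (T g y)" if gg: "g \<in> carrier G" and aa: "mg_adj E fst x y" for g x y
  proof -
    obtain m where "x \<in> W" "y \<in> W" "fst x \<noteq> fst y" "m \<in> snd x" "m \<in> snd y" using adj_D[OF aa] by blast
    then show ?thesis using adj_I[of "T g x" "T g y" "m \<otimes> g"] TW Tmem Tfst gg by auto
  qed
  have TRs: "(T g x, T g y) \<in> R\<^sup>*" if "g \<in> carrier G" "(x, y) \<in> R\<^sup>*" for g x y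
    using that(2)
  proof (induction rule: rtrancl_induct)
    case base then show ?case by simp
  next
    case (step y z)
    then have "(T g y, T g z) \<in> R" unfolding R_def using TW Tadj that(1) by auto
    with step show ?case by (meson rtrancl_into_rtrancl)
  qed
  have Tcomp: "T g ` comp v = comp (T g v)" if g: "g \<in> carrier G" and v: "v \<in> W" for g v
  proof
    show "T g ` comp v \<subseteq> comp (T g v)"
    proof
      fix w' assume "w' \<in> T g ` comp v"
      then obtain w where w: "w \<in> comp v" "w' = T g w" by blast
      then have "w \<in> W" "(v, w) \<in> R\<^sup>*" unfolding compD by auto
      then show "w' \<in> comp (T g v)" unfolding compD using TW[OF g] TRs[OF g] w(2) by blast
    qed
  next
    show "comp (T g v) \<subseteq> T g ` comp v"
    proof
      fix w assume "w \<in> comp (T g v)"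
      then have w: "w \<in> W" "(T g v, w) \<in> R\<^sup>*" unfolding compD by auto
      have ig: "inv g \<in> carrier G" using g by simp
      have "(T (inv g) (T g v), T (inv g) w) \<in> R\<^sup>*" using TRs[OF ig w(2)] .
      then have "T (inv g) w \<in> comp v" unfolding compD using TT[OF g v] TW[OF ig w(1)] by simp
      moreover have "T g (T (inv g) w) = w" using TT[OF ig w(1)] g by simp
      ultimately show "w \<in> T g ` comp v" by (metis imageI)
    qed
  qed
  have \<tau>E: "\<tau> g e \<in> E" if gg: "g \<in> carrier G" and ee: "e \<in> E" for g e
  proof -
    obtain x y a where h: "e = ({x,y},a)" "x \<in> W" "y \<in> W" "fst x \<noteq> fst y" "a \<in> snd x" "a \<in> snd y"
      using E_iff ee by blast
    have "\<tau> g e = ({T g x, T g y}, a \<otimes> g)" unfolding \<tau>_def h by simp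
    then show ?thesis using E_iff[of "\<tau> g e"] h TW Tmem Tfst gg by metis
  qed
  have \<tau>\<tau>: "\<tau> (inv g) (\<tau> g e) = e" if gg: "g \<in> carrier G" and ee: "e \<in> E" for g e
  proof -
    obtain x y a where h: "e = ({x,y},a)" "x \<in> W" "y \<in> W" "fst x \<noteq> fst y" "a \<in> snd x" "a \<in> snd y"
      using E_iff ee by blast
    have a: "a \<in> carrier G" using Wcar[OF h(2)] h(5) by auto
    show ?thesis unfolding \<tau>_def h using TT[OF gg h(2)] TT[OF gg h(3)] a gg
      by (simp add: m_assoc)
  qed
  have iso: "mg_iso (comp v) (induced_edges E fst (comp v)) fst (comp w) (induced_edges E fst (comp w)) fst"
    if v: "v \<in> W" and w: "w \<in> W" for v w
  proof -
    obtain a where a: "a \<in> snd v" using rc_sub(2)[OF Wsub[OF v] Wcos[OF v]] by blast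
    obtain b where b: "b \<in> snd w" using rc_sub(2)[OF Wsub[OF w] Wcos[OF w]] by blast
    have ac: "a \<in> carrier G" and bc: "b \<in> carrier G" using a b Wcar[OF v] Wcar[OF w] by blast+
    define g where "g = inv a \<otimes> b"
    have g: "g \<in> carrier G" unfolding g_def using ac bc by simp
    have ig: "inv g \<in> carrier G" using g by simp
    have "a \<otimes> g = b" unfolding g_def using ac bc by (simp add: m_assoc[symmetric])
    then have bT: "b \<in> snd (T g v)" using Tmem[OF a, of g] by simp
    have TvW: "T g v \<in> W" using TW[OF g v] .
    have cw: "comp (T g v) = comp w"
    proof (cases "fst (T g v) = fst w")
      case True
      have "snd (T g v) = snd w"
        using rc_eq[OF Wsub[OF w] _ Wcos[OF w] bT b] Wcos[OF TvW] True by simp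
      then have "T g v = w" using True by (simp add: prod_eq_iff)
      then show ?thesis by simp
    next
      case False
      then have "(T g v, w) \<in> R" unfolding R_def using adj_I[OF TvW w False bT b] TvW w by auto
      then show ?thesis using comp_eq by blast
    qed
    have Tc: "T g ` comp v = comp w" using Tcomp[OF g v] cw by simp
    have Tc': "T (inv g) ` comp w = comp v" using Tcomp[OF ig TvW] cw TT[OF g v] by simp
    have compW: "comp u \<subseteq> W" for u unfolding compD by auto
    have b1: "bij_betw (T g) (comp v) (comp w)"
    proof (rule bij_betw_imageI[OF _ Tc])
      show "inj_on (T g) (comp v)"
        by (rule inj_on_inverseI[where g = "T (inv g)"]) (use TT[OF g] compW in blast)
    qed
    have b2: "bij_betw (\<tau> g) (induced_edges E fst (comp v)) (induced_edges E fst (comp w))"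
    proof (rule bij_betw_byWitness[where f' = "\<tau> (inv g)"])
      show "\<forall>e\<in>induced_edges E fst (comp v). \<tau> (inv g) (\<tau> g e) = e"
        unfolding induced_edges_def using \<tau>\<tau>[OF g] by auto
      show "\<forall>e\<in>induced_edges E fst (comp w). \<tau> g (\<tau> (inv g) e) = e"
        unfolding induced_edges_def using \<tau>\<tau>[OF ig] g by auto
      show "\<tau> g ` induced_edges E fst (comp v) \<subseteq> induced_edges E fst (comp w)"
      proof
        fix e' assume "e' \<in> \<tau> g ` induced_edges E fst (comp v)"
        then obtain e where e: "e \<in> E" "fst e \<subseteq> comp v" "e' = \<tau> g e" unfolding induced_edges_def by blast
        have "fst (\<tau> g e) = T g ` fst e" unfolding \<tau>_def by simp
        also have "\<dots> \<subseteq> T g ` comp v" using e(2) by (rule image_mono)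
        finally show "e' \<in> induced_edges E fst (comp w)" unfolding induced_edges_def
          using \<tau>E[OF g e(1)] e(3) Tc by simp
      qed
      show "\<tau> (inv g) ` induced_edges E fst (comp w) \<subseteq> induced_edges E fst (comp v)"
      proof
        fix e' assume "e' \<in> \<tau> (inv g) ` induced_edges E fst (comp w)"
        then obtain e where e: "e \<in> E" "fst e \<subseteq> comp w" "e' = \<tau> (inv g) e" unfolding induced_edges_def by blast
        have "fst (\<tau> (inv g) e) = T (inv g) ` fst e" unfolding \<tau>_def by simp
        also have "\<dots> \<subseteq> T (inv g) ` comp w" using e(2) by (rule image_mono)
        finally show "e' \<in> induced_edges E fst (comp v)" unfolding induced_edges_def
          using \<tau>E[OF ig e(1)] e(3) Tc' by simp
      qed
    qed
    have b3: "\<forall>e\<in>induced_edges E fst (comp v). fst (\<tau> g e) = T g ` fst e"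
      unfolding \<tau>_def by simp
    show ?thesis unfolding mg_iso_def using b1 b2 b3 by blast
  qed
  define Q where "Q = (\<lambda>(x::'i \<times> 'a set) (y::'i \<times> 'a set). \<forall>c\<in>snd x. \<forall>d\<in>snd y. \<exists>h\<in>H i. \<exists>k\<in>H j. c \<otimes> inv d = h \<otimes> k)"
  have Hi: "subgroup (H i) G" and Hj: "subgroup (H j) G" using subH assms(3,4) by auto
  have inner: "c \<otimes> inv d \<in> H i \<or> c \<otimes> inv d \<in> H j" if "z \<in> W" "c \<in> snd z" "d \<in> snd z" for z c d
    using rc_diff[OF Wsub[OF that(1)] Wcos[OF that(1)] that(2,3)] W_iff[of z] that(1) by auto
  have Qrefl: "Q z z" if z: "z \<in> W" for z
    unfolding Q_def
  proof (intro ballI)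
    fix c d assume cd: "c \<in> snd z" "d \<in> snd z"
    have cc: "c \<otimes> inv d \<in> carrier G" using cd Wcar[OF z] by auto
    from inner[OF z cd] show "\<exists>h\<in>H i. \<exists>k\<in>H j. c \<otimes> inv d = h \<otimes> k"
    proof
      assume "c \<otimes> inv d \<in> H i"
      then show ?thesis using cc subgroup.one_closed[OF Hj] by (metis r_one)
    next
      assume "c \<otimes> inv d \<in> H j"
      then show ?thesis using cc subgroup.one_closed[OF Hi] by (metis l_one)
    qed
  qed
  have Qstep: "Q x z" if q: "Q x y" and yz: "(y, z) \<in> R" and x: "x \<in> W" for x y z
    unfolding Q_def
  proof (intro ballI)
    fix c d assume c: "c \<in> snd x" and d: "d \<in> snd z"
    obtain m where y: "y \<in> W" and z: "z \<in> W" and m: "m \<in> snd y" "m \<in> snd z"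
      using yz adj_D unfolding R_def by blast
    obtain h k where hk: "h \<in> H i" "k \<in> H j" "c \<otimes> inv m = h \<otimes> k" using q c m(1) unfolding Q_def by blast
    have cc: "c \<in> carrier G" "d \<in> carrier G" "m \<in> carrier G" using c d m Wcar[OF x] Wcar[OF y] Wcar[OF z] by blast+
    have hc: "h \<in> carrier G" "k \<in> carrier G" using hk Hi Hj subgroup.mem_carrier by metis+
    define u where "u = m \<otimes> inv d"
    have uc: "u \<in> carrier G" unfolding u_def using cc by simp
    have "c \<otimes> inv d = (c \<otimes> inv m) \<otimes> u" unfolding u_def using cc
      by (simp add: m_assoc[symmetric]) (simp add: m_assoc)
    also have "\<dots> = h \<otimes> k \<otimes> u" using hk by simp
    finally have eq: "c \<otimes> inv d = h \<otimes> k \<otimes> u" .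
    from inner[OF z m(2) d] show "\<exists>h\<in>H i. \<exists>k\<in>H j. c \<otimes> inv d = h \<otimes> k"
    proof
      assume "m \<otimes> inv d \<in> H i"
      then have "h \<otimes> u \<in> H i" unfolding u_def using hk Hi subgroup.m_closed by metis
      moreover have "c \<otimes> inv d = (h \<otimes> u) \<otimes> k" using eq hc uc by (simp add: m_ac)
      ultimately show ?thesis using hk by blast
    next
      assume "m \<otimes> inv d \<in> H j"
      then have "k \<otimes> u \<in> H j" unfolding u_def using hk Hj subgroup.m_closed by metis
      moreover have "c \<otimes> inv d = h \<otimes> (k \<otimes> u)" using eq hc uc by (simp add: m_ac)
      ultimately show ?thesis using hk by blast
    qed
  qed
  have Qall: "Q x y" if "(x, y) \<in> R\<^sup>*" "x \<in> W" for x y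
    using that(1)
  proof (induction rule: rtrancl_induct)
    case base then show ?case using Qrefl that(2) by simp
  next
    case (step y z) then show ?case using Qstep that(2) by blast
  qed
  have bip: "mg_adj E fst v w" if K: "K \<in> comp ` W" and v: "v \<in> K" "fst v = i" and w: "w \<in> K" "fst w = j" for K v w
  proof -
    obtain u where u: "u \<in> W" "K = comp u" using K by blast
    have vw: "v \<in> W" "w \<in> W" "(u, v) \<in> R\<^sup>*" "(u, w) \<in> R\<^sup>*" using u v w unfolding compD by auto
    have "(v, w) \<in> R\<^sup>*" using R_sym[OF vw(3)] vw(4) by (rule rtrancl_trans)
    then have q: "Q v w" using Qall vw(1) by blast
    obtain c where c: "c \<in> snd v" using rc_sub(2)[OF Wsub[OF vw(1)] Wcos[OF vw(1)]] by blast
    obtain d where d: "d \<in> snd w" using rc_sub(2)[OF Wsub[OF vw(2)] Wcos[OF vw(2)]] by blast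
    obtain h k where hk: "h \<in> H i" "k \<in> H j" "c \<otimes> inv d = h \<otimes> k" using q c d unfolding Q_def by blast
    have cc: "c \<in> carrier G" "d \<in> carrier G" using c d Wcar[OF vw(1)] Wcar[OF vw(2)] by blast+
    have hc: "h \<in> carrier G" "k \<in> carrier G" using hk Hi Hj subgroup.mem_carrier by metis+
    have "k \<otimes> d = inv h \<otimes> (h \<otimes> k) \<otimes> d" using hc by (simp add: m_assoc[symmetric])
    also have "\<dots> = inv h \<otimes> (c \<otimes> inv d) \<otimes> d" using hk by simp
    also have "\<dots> = inv h \<otimes> c" using cc hc by (simp add: m_assoc)
    finally have eq: "k \<otimes> d = inv h \<otimes> c" .
    have m1: "k \<otimes> d \<in> snd w" using rc_left[OF Wsub[OF vw(2)] Wcos[OF vw(2)] d] hk w(2) by simp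
    have "inv h \<in> H i" using hk Hi subgroup.m_inv_closed by metis
    then have m2: "k \<otimes> d \<in> snd v" using rc_left[OF Wsub[OF vw(1)] Wcos[OF vw(1)] c] v(2) eq by simp
    show ?thesis using adj_I[OF vw(1,2) _ m2 m1] v(2) w(2) assms(5) by simp
  qed
  have comps: "mg_components W E fst = comp ` W" unfolding mg_components_def comp_def by simp
  have lv: "fst v = k" if "v \<in> Phi_level G s k" for v k using that unfolding Phi_level_def by auto
  show ?thesis unfolding Let_def W_def[symmetric] E_def[symmetric] comps
    using iso bip lv by blast
qed

end

theorem proposition5:
  fixes G :: "('a, 'b) monoid_scheme" and I :: "'i set" and s :: "'i \<Rightarrow> 'a"
  assumes "comm_group G" and "finite I" and "s \<in> I \<rightarrow> carrier G"
    and "i \<in> I" and "j \<in> I" and "i \<noteq> j"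
  shows "let W = Phi_level G s i \<union> Phi_level G s j;
             E = induced_edges (Phi_E G I s) fst W
         in (\<forall>K\<in>mg_components W E fst. \<forall>L\<in>mg_components W E fst.
               mg_iso K (induced_edges E fst K) fst L (induced_edges E fst L) fst)
          \<and> (\<forall>K\<in>mg_components W E fst. \<forall>v\<in>K \<inter> Phi_level G s i. \<forall>w\<in>K \<inter> Phi_level G s j.
               mg_adj E fst v w)"
  using comm_group.prop5_aux[OF assms] .

end
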